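(* Let $k\hookrightarrow K$ be a finite field extension, $V$ a $K$-vector space and $\varphi\in\mathrm{End}_K(V)$ finite potent such that $1+\varphi$ is invertible. Then $$\operatorname{Det}^k_V(1+\varphi)=N_{K/k}\big[\operatorname{Det}^K_V(1+\varphi)\big],$$ where $N_{K/k}\colon K^\times\to k^\times$ is the norm of the extension and $V$ is regarded as a $k$-vector space on the left-hand side.
   Context: An endomorphism $\varphi$ of a vector space $U$ over a field $F$ is finite potent if $\varphi^nU$ is finite dimensional for some $n$; then $\operatorname{Det}^F_U(1+\varphi)$ is the ordinary determinant over $F$ of $1+\varphi$ restricted to any finite-dimensional $\varphi$-invariant $F$-subspace $W$ with $\varphi^nU\subseteq W$ for some $n$. *)

theory Defs
  imports Main "Jordan_Normal_Form.Determinant"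
begin

definition fin_dim_subspace :: "('s::field \<Rightarrow> 'v::ab_group_add \<Rightarrow> 'v) \<Rightarrow> 'v set \<Rightarrow> bool" where
  "fin_dim_subspace sc W \<longleftrightarrow> module.subspace sc W \<and>
     (\<exists>B. finite B \<and> B \<subseteq> W \<and> module.span sc B = W)"

definition lin_det :: "('s::field \<Rightarrow> 'v::ab_group_add \<Rightarrow> 'v) \<Rightarrow> 'v set \<Rightarrow> ('v \<Rightarrow> 'v) \<Rightarrow> 's" where
  "lin_det sc W f =
     (let bs = (SOME bs. distinct bs \<and> \<not> module.dependent sc (set bs) \<and> module.span sc (set bs) = W)
      in det (mat (length bs) (length bs)
                (\<lambda>(i, j). module.representation sc (set bs) (f (bs ! j)) (bs ! i))))"

definition finite_potent :: "('s::field \<Rightarrow> 'v::ab_group_add \<Rightarrow> 'v) \<Rightarrow> ('v \<Rightarrow> 'v) \<Rightarrow> bool" where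
  "finite_potent sc \<phi> \<longleftrightarrow> (\<exists>n. fin_dim_subspace sc (module.span sc (range (\<phi> ^^ n))))"

definition Det_one_plus :: "('s::field \<Rightarrow> 'v::ab_group_add \<Rightarrow> 'v) \<Rightarrow> ('v \<Rightarrow> 'v) \<Rightarrow> 's" where
  "Det_one_plus sc \<phi> =
     (let W = (SOME W. fin_dim_subspace sc W \<and> \<phi> ` W \<subseteq> W \<and> (\<exists>n. range (\<phi> ^^ n) \<subseteq> W))
      in lin_det sc W (\<lambda>v. v + \<phi> v))"

definition field_norm :: "('k::field \<Rightarrow> 'K::field) \<Rightarrow> 'K \<Rightarrow> 'k" where
  "field_norm \<iota> x = lin_det (\<lambda>a y. \<iota> a * y) UNIV (\<lambda>y. x * y)"

end

theory Submission
  imports Defs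
begin


lemma sum_set_nth: "distinct xs \<Longrightarrow> (\<Sum>x\<in>set xs. g x) = (\<Sum>i<length xs. g (xs!i))"
  by (rule sum.reindex_bij_betw[symmetric], rule bij_betw_nth) auto

definition rmat :: "('s::field \<Rightarrow> 'v::ab_group_add \<Rightarrow> 'v) \<Rightarrow> 'v list \<Rightarrow> 'v list \<Rightarrow> ('v \<Rightarrow> 'v) \<Rightarrow> 's mat" where
  "rmat sc cs bs f = mat (length cs) (length bs) (\<lambda>(i,j). module.representation sc (set cs) (f (bs!j)) (cs!i))"

definition blist :: "('s::field \<Rightarrow> 'v::ab_group_add \<Rightarrow> 'v) \<Rightarrow> 'v set \<Rightarrow> 'v list \<Rightarrow> bool" where
  "blist sc W bs \<longleftrightarrow> distinct bs \<and> \<not> module.dependent sc (set bs) \<and> module.span sc (set bs) = W"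

lemma rmat_index[simp]: "i < length cs \<Longrightarrow> j < length bs \<Longrightarrow>
   rmat sc cs bs f $$ (i,j) = module.representation sc (set cs) (f (bs!j)) (cs!i)"
  "dim_row (rmat sc cs bs f) = length cs" "dim_col (rmat sc cs bs f) = length bs"
  by (auto simp: rmat_def)

lemma rmat_carrier[simp]: "rmat sc cs bs f \<in> carrier_mat (length cs) (length bs)"
  by (auto simp: rmat_def)

lemma mult_mat_index_sum: "i < dim_row A \<Longrightarrow> j < dim_col B \<Longrightarrow> dim_col A = dim_row B \<Longrightarrow>
  (A * B) $$ (i,j) = (\<Sum>k<dim_row B. A $$ (i,k) * B $$ (k,j))"
  by (simp add: scalar_prod_def atLeast0LessThan)

context vector_space begin

lemma rep_expand:
  assumes "independent (set cs)" "distinct cs" "x \<in> span (set cs)"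
  shows "x = (\<Sum>k<length cs. representation (set cs) x (cs!k) *s cs!k)"
proof -
  have "(\<Sum>b\<in>set cs. representation (set cs) x b *s b) = x"
    by (rule sum_representation_eq[OF assms(1) assms(3)]) auto
  then show ?thesis by (simp add: sum_set_nth[OF assms(2)])
qed

lemma rmat_comp:
  assumes bs: "independent (set bs)" and cs: "independent (set cs)" "distinct cs"
    and lf: "Vector_Spaces.linear scale scale f" and lg: "Vector_Spaces.linear scale scale g"
    and fds: "\<And>j. j < length ds \<Longrightarrow> f (ds!j) \<in> span (set cs)"
    and gcs: "\<And>k. k < length cs \<Longrightarrow> g (cs!k) \<in> span (set bs)"
  shows "rmat scale bs ds (\<lambda>x. g (f x)) = rmat scale bs cs g * rmat scale cs ds f"
proof (rule eq_matI)
  interpret f: Vector_Spaces.linear scale scale f by (rule lf)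
  interpret g: Vector_Spaces.linear scale scale g by (rule lg)
  fix i j assume i: "i < dim_row (rmat scale bs cs g * rmat scale cs ds f)"
    and j: "j < dim_col (rmat scale bs cs g * rmat scale cs ds f)"
  hence i: "i < length bs" and j: "j < length ds" by auto
  define R where "R k = representation (set cs) (f (ds!j)) (cs!k)" for k
  have fe: "f (ds!j) = (\<Sum>k<length cs. R k *s cs!k)"
    unfolding R_def by (rule rep_expand[OF cs fds[OF j]])
  have gfe: "g (f (ds!j)) = (\<Sum>k<length cs. R k *s g (cs!k))"
    by (subst fe) (simp add: g.sum g.scale)
  have eq1: "representation (set bs) (\<Sum>k<length cs. R k *s g (cs!k)) = (\<lambda>b. \<Sum>k<length cs. representation (set bs) (R k *s g (cs!k)) b)"
    by (rule representation_sum[OF bs]) (rule span_scale, rule gcs, simp)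
  have eq2: "\<And>k. k < length cs \<Longrightarrow> representation (set bs) (R k *s g (cs!k)) = (\<lambda>b. R k * representation (set bs) (g (cs!k)) b)"
    by (rule representation_scale[OF bs gcs])
  have "representation (set bs) (g (f (ds!j))) (bs!i) = (\<Sum>k<length cs. representation (set bs) (R k *s g (cs!k)) (bs!i))"
    by (simp only: gfe eq1)
  also have "\<dots> = (\<Sum>k<length cs. R k * representation (set bs) (g (cs!k)) (bs!i))"
    by (rule sum.cong) (simp_all add: eq2)
  also have "\<dots> = (\<Sum>k<length cs. rmat scale bs cs g $$ (i,k) * rmat scale cs ds f $$ (k,j))"
    using i j by (auto simp: R_def mult.commute intro!: sum.cong)
  also have "\<dots> = (rmat scale bs cs g * rmat scale cs ds f) $$ (i, j)"
    using i j by (subst mult_mat_index_sum) auto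
  finally show "rmat scale bs ds (\<lambda>x. g (f x)) $$ (i, j) = (rmat scale bs cs g * rmat scale cs ds f) $$ (i, j)"
    using i j by simp
qed auto

lemma rmat_id:
  assumes "independent (set bs)" "distinct bs"
  shows "rmat scale bs bs (\<lambda>x. x) = 1\<^sub>m (length bs)"
  by (rule eq_matI) (auto simp: representation_basis[OF assms(1)] nth_eq_iff_index_eq[OF assms(2)])


lemma blistD:
  assumes "blist scale W bs"
  shows "distinct bs" "independent (set bs)" "span (set bs) = W"
  using assms by (auto simp: blist_def)

lemma blist_card:
  assumes "blist scale W bs"
  shows "length bs = dim W"
proof -
  note B = blistD[OF assms]
  have sb: "set bs \<subseteq> W" using span_superset[of "set bs"] B(3) by simp
  have "W \<subseteq> span (set bs)" using B(3) by simp
  from basis_card_eq_dim[OF sb this B(2)] show ?thesis using distinct_card[OF B(1)] by simp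
qed

lemma blist_len:
  assumes "blist scale W bs" "blist scale W cs"
  shows "length bs = length cs"
  using blist_card[OF assms(1)] blist_card[OF assms(2)] by simp

lemma det_rmat_indep:
  assumes bs: "blist scale W bs" and cs: "blist scale W cs"
    and lf: "Vector_Spaces.linear scale scale f" and fW: "f ` W \<subseteq> W"
  shows "det (rmat scale bs bs f) = det (rmat scale cs cs f)"
proof -
  note B = blistD[OF bs] and C = blistD[OF cs]
  have len: "length bs = length cs" by (rule blist_len[OF bs cs])
  have lid: "Vector_Spaces.linear scale scale (\<lambda>x. x)" using linear_id unfolding id_def .
  have bW: "\<And>j. j < length bs \<Longrightarrow> bs!j \<in> W" using B(3) span_superset by force
  have cW: "\<And>j. j < length cs \<Longrightarrow> cs!j \<in> W" using C(3) span_superset by force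
  have fb: "\<And>j. j < length bs \<Longrightarrow> f (bs!j) \<in> span (set cs)" using fW bW C(3) by auto
  have fc: "\<And>j. j < length cs \<Longrightarrow> f (cs!j) \<in> span (set cs)" using fW cW C(3) by auto
  have ib: "\<And>j. j < length bs \<Longrightarrow> bs!j \<in> span (set cs)" using bW C(3) by auto
  have ic: "\<And>j. j < length cs \<Longrightarrow> cs!j \<in> span (set bs)" using cW B(3) by auto
  have ib': "\<And>j. j < length bs \<Longrightarrow> bs!j \<in> span (set bs)" using bW B(3) by auto
  have e1: "rmat scale bs bs (\<lambda>x. (\<lambda>x. x) (f x)) = rmat scale bs cs (\<lambda>x. x) * rmat scale cs bs f"
    by (rule rmat_comp[OF B(2) C(2) C(1) lf lid fb ic])
  have e2: "rmat scale cs bs (\<lambda>x. f ((\<lambda>x. x) x)) = rmat scale cs cs f * rmat scale cs bs (\<lambda>x. x)"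
    by (rule rmat_comp[OF C(2) C(2) C(1) lid lf ib fc])
  have e3: "rmat scale bs bs (\<lambda>x. (\<lambda>x. x) ((\<lambda>x. x) x)) = rmat scale bs cs (\<lambda>x. x) * rmat scale cs bs (\<lambda>x. x)"
    by (rule rmat_comp[OF B(2) C(2) C(1) lid lid ib ic])
  have e3': "rmat scale bs bs (\<lambda>x. x) = 1\<^sub>m (length bs)" by (rule rmat_id[OF B(2) B(1)])
  let ?P = "rmat scale bs cs (\<lambda>x. x)" and ?Q = "rmat scale cs bs (\<lambda>x. x)" and ?M = "rmat scale cs cs f"
  have P: "?P \<in> carrier_mat (length bs) (length bs)" and Q: "?Q \<in> carrier_mat (length bs) (length bs)"
    and M: "?M \<in> carrier_mat (length bs) (length bs)" using len by auto
  have PQ: "?P * ?Q = 1\<^sub>m (length bs)" using e3 e3' by simp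
  have "det ?P * det ?Q = 1" using det_mult[OF P Q, unfolded PQ] by simp
  moreover have "det (rmat scale bs bs f) = det ?P * (det ?M * det ?Q)"
    using e1 e2 det_mult[OF P mult_carrier_mat[OF M Q]] det_mult[OF M Q] by simp
  ultimately show ?thesis by (simp add: algebra_simps)
qed

lemma lin_det_eq:
  assumes bs: "blist scale W bs" and lf: "Vector_Spaces.linear scale scale f" and fW: "f ` W \<subseteq> W"
  shows "lin_det scale W f = det (rmat scale bs bs f)"
proof -
  define cs where "cs = (SOME bs. distinct bs \<and> \<not> dependent (set bs) \<and> span (set bs) = W)"
  have cs: "blist scale W cs" unfolding cs_def blist_def
    by (rule someI[of _ bs]) (use bs in \<open>auto simp: blist_def\<close>)
  have "lin_det scale W f = det (rmat scale cs cs f)"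
    unfolding lin_det_def Let_def cs_def[symmetric] rmat_def ..
  also have "\<dots> = det (rmat scale bs bs f)" by (rule det_rmat_indep[OF cs bs lf fW])
  finally show ?thesis .
qed

lemma lin_det_cong:
  assumes bs: "blist scale W bs" and eq: "\<And>x. x \<in> W \<Longrightarrow> f x = g x"
  shows "lin_det scale W f = lin_det scale W g"
proof -
  define cs where "cs = (SOME bs. distinct bs \<and> \<not> dependent (set bs) \<and> span (set bs) = W)"
  have cs: "blist scale W cs" unfolding cs_def blist_def
    by (rule someI[of _ bs]) (use bs in \<open>auto simp: blist_def\<close>)
  have cW: "\<And>j. j < length cs \<Longrightarrow> cs!j \<in> W" using blistD(3)[OF cs] span_superset by force
  have "rmat scale cs cs f = rmat scale cs cs g"
    by (rule eq_matI) (auto simp: eq cW)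
  then show ?thesis
    unfolding lin_det_def Let_def cs_def[symmetric] rmat_def[symmetric] by simp
qed

lemma lin_det_mult:
  assumes bs: "blist scale W bs" and lf: "Vector_Spaces.linear scale scale f" and fW: "f ` W \<subseteq> W"
    and lg: "Vector_Spaces.linear scale scale g" and gW: "g ` W \<subseteq> W"
  shows "lin_det scale W (\<lambda>x. g (f x)) = lin_det scale W g * lin_det scale W f"
proof -
  note B = blistD[OF bs]
  have bW: "\<And>j. j < length bs \<Longrightarrow> bs!j \<in> W" using B(3) span_superset by force
  have lgf: "Vector_Spaces.linear scale scale (\<lambda>x. g (f x))"
    using Vector_Spaces.linear_compose[OF lf lg] unfolding o_def .
  have fb: "\<And>j. j < length bs \<Longrightarrow> f (bs!j) \<in> span (set bs)" using fW bW B(3) by auto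
  have gb: "\<And>j. j < length bs \<Longrightarrow> g (bs!j) \<in> span (set bs)" using gW bW B(3) by auto
  have "rmat scale bs bs (\<lambda>x. g (f x)) = rmat scale bs bs g * rmat scale bs bs f"
    by (rule rmat_comp[OF B(2) B(2) B(1) lf lg fb gb])
  then show ?thesis
    using lin_det_eq[OF bs lgf] fW gW lin_det_eq[OF bs lf fW] lin_det_eq[OF bs lg gW]
      det_mult[of "rmat scale bs bs g" "length bs" "rmat scale bs bs f"] by auto
qed

lemma lin_det_id:
  assumes bs: "blist scale W bs"
  shows "lin_det scale W (\<lambda>x. x) = 1"
proof -
  have lid: "Vector_Spaces.linear scale scale (\<lambda>x. x)" using linear_id unfolding id_def .
  show ?thesis using lin_det_eq[OF bs lid] rmat_id[OF blistD(2,1)[OF bs]] by simp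
qed

lemma fin_dim_blist:
  assumes "fin_dim_subspace scale W"
  obtains bs where "blist scale W bs"
proof -
  from assms obtain B where B: "finite B" "B \<subseteq> W" "span B = W"
    unfolding fin_dim_subspace_def by auto
  obtain C where C: "C \<subseteq> B" "independent C" "B \<subseteq> span C"
    using maximal_independent_subset[of B] by blast
  have "span C \<subseteq> W" using span_mono[OF C(1)] B(3) by simp
  moreover have "W \<subseteq> span C" using span_minimal[OF C(3) subspace_span] B(3) by simp
  ultimately have "span C = W" by (rule subset_antisym)
  moreover have "finite C" using C(1) B(1) finite_subset by blast
  then obtain cs where "set cs = C" "distinct cs" using finite_distinct_list by blast
  ultimately show ?thesis using that C by (auto simp: blist_def)
qed

lemma sub_blist:
  assumes ws: "blist scale W ws" and U: "subspace U" "U \<subseteq> W"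
  obtains us where "blist scale U us"
proof -
  obtain C where C: "C \<subseteq> U" "independent C" "U \<subseteq> span C"
    using maximal_independent_subset[of U] by blast
  have "finite C"
    using independent_span_bound[of "set ws" C] C U blistD[OF ws] by auto
  then obtain cs where "set cs = C" "distinct cs" using finite_distinct_list by blast
  moreover have "span C = U" using C U span_minimal[of C U] by auto
  ultimately show ?thesis using that C by (auto simp: blist_def)
qed

lemma blist_fin_dim:
  assumes "blist scale W bs" shows "fin_dim_subspace scale W"
proof -
  note B = blistD[OF assms]
  have "subspace W" using subspace_span[of "set bs"] B(3) by simp
  moreover have "set bs \<subseteq> W" using span_superset[of "set bs"] B(3) by simp
  ultimately show ?thesis unfolding fin_dim_subspace_def using B(3) by blast
qed


lemma blist_append:
  assumes "blist scale W (us @ us')"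
  shows "blist scale (span (set us)) us" "blist scale (span (set us')) us'" "set us \<inter> set us' = {}"
  using assms by (auto simp: blist_def intro: dependent_mono)

lemma proj_exists:
  assumes bs: "blist scale W (us @ us')"
  obtains p where "Vector_Spaces.linear scale scale p" "\<And>x. x \<in> span (set us) \<Longrightarrow> p x = 0"
    "\<And>x. x \<in> span (set us') \<Longrightarrow> p x = x"
    "\<And>y. y \<in> W \<Longrightarrow> p y \<in> span (set us')" "\<And>y. y \<in> W \<Longrightarrow> y - p y \<in> span (set us)"
proof -
  interpret vp: vector_space_pair scale scale by unfold_locales
  note B = blistD[OF bs]
  have dis: "set us \<inter> set us' = {}" using blist_append[OF bs] by simp
  define p where "p = vp.construct (set (us @ us')) (\<lambda>b. if b \<in> set us' then b else 0)"
  have lp: "Vector_Spaces.linear scale scale p" unfolding p_def by (rule vp.linear_construct[OF B(2)])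
  have pb: "\<And>b. b \<in> set (us @ us') \<Longrightarrow> p b = (if b \<in> set us' then b else 0)"
    unfolding p_def by (rule vp.construct_basis[OF B(2)])
  have lz: "Vector_Spaces.linear scale scale (\<lambda>x. 0)"
    by (rule vp.linear_zero)
  have lid: "Vector_Spaces.linear scale scale (\<lambda>x. x)" using linear_id unfolding id_def .
  have p0: "p x = 0" if "x \<in> span (set us)" for x
    by (rule vp.linear_eq_on[OF lp lz that]) (use pb dis in auto)
  have p1: "p x = x" if "x \<in> span (set us')" for x
    by (rule vp.linear_eq_on[OF lp lid that]) (use pb in auto)
  interpret lpi: Vector_Spaces.linear scale scale p by (rule lp)
  have dec: "p y \<in> span (set us') \<and> y - p y \<in> span (set us)" if "y \<in> W" for y
  proof -
    have "y \<in> span (set us \<union> set us')" using that B(3) by simp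
    then obtain a b where ab: "y = a + b" "a \<in> span (set us)" "b \<in> span (set us')"
      unfolding span_Un by blast
    then have "p y = b" using lpi.add[of a b] p0[OF ab(2)] p1[OF ab(3)] by simp
    then show ?thesis using ab by simp
  qed
  show ?thesis by (rule that[OF lp p0 p1]) (use dec in auto)
qed

lemma lin_det_split:
  assumes bs: "blist scale W (us @ us')"
    and lf: "Vector_Spaces.linear scale scale f" and fW: "f ` W \<subseteq> W"
    and fU: "f ` span (set us) \<subseteq> span (set us)"
    and lp: "Vector_Spaces.linear scale scale p"
    and p0: "\<And>x. x \<in> span (set us) \<Longrightarrow> p x = 0" and p1: "\<And>x. x \<in> span (set us') \<Longrightarrow> p x = x"
  shows "lin_det scale W f = lin_det scale (span (set us)) f * lin_det scale (span (set us')) (\<lambda>x. p (f x))"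
proof -
  interpret lpi: Vector_Spaces.linear scale scale p by (rule lp)
  note B = blistD[OF bs]
  note B1 = blist_append(1)[OF bs] and B2 = blist_append(2)[OF bs] and dis = blist_append(3)[OF bs]
  let ?U = "span (set us)" and ?U' = "span (set us')"
  have UW: "?U \<subseteq> W" using B(3) span_mono[of "set us" "set (us @ us')"] by auto
  have U'W: "?U' \<subseteq> W" using B(3) span_mono[of "set us'" "set (us @ us')"] by auto
  have dec: "p y \<in> ?U' \<and> y - p y \<in> ?U" if "y \<in> W" for y
  proof -
    have "y \<in> span (set us \<union> set us')" using that B(3) by simp
    then obtain a b where ab: "y = a + b" "a \<in> span (set us)" "b \<in> span (set us')"
      unfolding span_Un by blast
    then have "p y = b" using lpi.add[of a b] p0[OF ab(2)] p1[OF ab(3)] by simp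
    then show ?thesis using ab by simp
  qed
  have lpf: "Vector_Spaces.linear scale scale (\<lambda>x. p (f x))"
    using Vector_Spaces.linear_compose[OF lf lp] unfolding o_def .
  have pfU': "(\<lambda>x. p (f x)) ` ?U' \<subseteq> ?U'"
  proof
    fix z assume "z \<in> (\<lambda>x. p (f x)) ` ?U'"
    then obtain x where x: "x \<in> ?U'" "z = p (f x)" by blast
    have "f x \<in> W" using x(1) U'W fW by blast
    then show "z \<in> ?U'" using dec x(2) by blast
  qed
  have repU: "representation (set (us @ us')) y b = representation (set us) (y - p y) b"
    if "y \<in> W" "b \<in> set us" for y b
  proof -
    have "representation (set (us @ us')) y b = representation (set (us @ us')) ((y - p y) + p y) b" by simp
    also have "\<dots> = representation (set (us @ us')) (y - p y) b + representation (set (us @ us')) (p y) b"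
    proof -
      have a: "y - p y \<in> span (set (us @ us'))" using dec[OF that(1)] UW unfolding B(3) by blast
      have b: "p y \<in> span (set (us @ us'))" using dec[OF that(1)] U'W unfolding B(3) by blast
      show ?thesis using representation_add[OF B(2) b a] by simp
    qed
    also have "representation (set (us @ us')) (p y) b = representation (set us') (p y) b"
      using dec[OF that(1)] representation_extend[OF B(2), of "p y" "set us'"] by (simp add: le_supI2)
    also have "\<dots> = 0" using representation_ne_zero[of "set us'" "p y" b] dis that(2) by auto
    also have "representation (set (us @ us')) (y - p y) b = representation (set us) (y - p y) b"
      using dec[OF that(1)] representation_extend[OF B(2), of "y - p y" "set us"] by (simp add: le_supI1)
    finally show ?thesis by simp
  qed
  have repU': "representation (set (us @ us')) y b = representation (set us') (p y) b"
    if "y \<in> W" "b \<in> set us'" for y b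
  proof -
    have "representation (set (us @ us')) y b = representation (set (us @ us')) ((y - p y) + p y) b" by simp
    also have "\<dots> = representation (set (us @ us')) (y - p y) b + representation (set (us @ us')) (p y) b"
    proof -
      have a: "y - p y \<in> span (set (us @ us'))" using dec[OF that(1)] UW unfolding B(3) by blast
      have b: "p y \<in> span (set (us @ us'))" using dec[OF that(1)] U'W unfolding B(3) by blast
      show ?thesis using representation_add[OF B(2) b a] by simp
    qed
    also have "representation (set (us @ us')) (y - p y) b = representation (set us) (y - p y) b"
      using dec[OF that(1)] representation_extend[OF B(2), of "y - p y" "set us"] by (simp add: le_supI1)
    also have "\<dots> = 0" using representation_ne_zero[of "set us" "y - p y" b] dis that(2) by auto
    also have "representation (set (us @ us')) (p y) b = representation (set us') (p y) b"
      using dec[OF that(1)] representation_extend[OF B(2), of "p y" "set us'"] by (simp add: le_supI2)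
    finally show ?thesis by simp
  qed
  have usW: "\<And>j. j < length us \<Longrightarrow> us!j \<in> ?U" by (rule span_base) simp
  have us'W: "\<And>j. j < length us' \<Longrightarrow> us'!j \<in> ?U'" by (rule span_base) simp
  let ?A = "rmat scale us us f" and ?D = "rmat scale us' us' (\<lambda>x. p (f x))"
  define Bm where "Bm = mat (length us) (length us') (\<lambda>(i,j). rmat scale (us @ us') (us @ us') f $$ (i, j + length us))"
  have M: "rmat scale (us @ us') (us @ us') f = four_block_mat ?A Bm (0\<^sub>m (length us') (length us)) ?D"
  proof (rule eq_matI)
    fix i j assume i: "i < dim_row (four_block_mat ?A Bm (0\<^sub>m (length us') (length us)) ?D)"
      and j: "j < dim_col (four_block_mat ?A Bm (0\<^sub>m (length us') (length us)) ?D)"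
    then have i: "i < length us + length us'" and j: "j < length us + length us'" by auto
    show "rmat scale (us @ us') (us @ us') f $$ (i, j) = four_block_mat ?A Bm (0\<^sub>m (length us') (length us)) ?D $$ (i, j)"
    proof (cases "i < length us")
      case True
      show ?thesis
      proof (cases "j < length us")
        case True2: True
        have y: "f (us!j) \<in> ?U" using fU usW[OF True2] by auto
        have "f (us!j) \<in> W" using y UW by auto
        then show ?thesis using True True2 i j repU[of "f (us!j)" "us!i"] p0[OF y]
          by (simp add: nth_append)
      next
        case False
        then show ?thesis using True i j by (simp add: nth_append Bm_def)
      qed
    next
      case False
      then have i': "i - length us < length us'" using i by auto
      show ?thesis
      proof (cases "j < length us")
        case True2: True
        have y: "f (us!j) \<in> ?U" using fU usW[OF True2] by auto
        have "f (us!j) \<in> W" using y UW by auto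
        then show ?thesis using False True2 i j i' repU'[of "f (us!j)" "us'!(i - length us)"] p0[OF y]
          by (simp add: nth_append representation_zero)
      next
        case False2: False
        have j': "j - length us < length us'" using j False2 by auto
        have y: "f (us'!(j - length us)) \<in> W" using fW U'W us'W[OF j'] by auto
        then show ?thesis using False False2 i j i' repU'[OF y, of "us'!(i - length us)"]
          by (simp add: nth_append)
      qed
    qed
  qed auto
  have Bmc: "Bm \<in> carrier_mat (length us) (length us')" unfolding Bm_def by (rule mat_carrier)
  have e1: "lin_det scale W f = det (rmat scale (us @ us') (us @ us') f)" by (rule lin_det_eq[OF bs lf fW])
  have e2: "det (rmat scale (us @ us') (us @ us') f) = det ?A * det ?D"
    unfolding M by (rule det_four_block_mat_lower_left_zero[of ?A "length us" Bm "length us'" "0\<^sub>m (length us') (length us)" ?D]; (rule rmat_carrier Bmc refl))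
  have e3: "det ?A = lin_det scale ?U f" by (rule lin_det_eq[OF B1 lf fU, symmetric])
  have e4: "det ?D = lin_det scale ?U' (\<lambda>x. p (f x))" by (rule lin_det_eq[OF B2 lpf pfU', symmetric])
  show ?thesis by (simp only: e1 e2 e3 e4)
qed

end



context vector_space begin

lemma blist_extend:
  assumes ws: "blist scale W ws" and us: "blist scale U us" and UW: "U \<subseteq> W"
  obtains us' where "blist scale W (us @ us')"
proof -
  note Bw = blistD[OF ws] and Bu = blistD[OF us]
  have sW: "subspace W" using subspace_span[of "set ws"] Bw(3) by simp
  have "set us \<subseteq> W" using span_superset[of "set us"] Bu(3) UW by blast
  then obtain B where B: "set us \<subseteq> B" "B \<subseteq> W" "independent B" "W \<subseteq> span B"
    using maximal_independent_subset_extend[of "set us" W] Bu(2) by blast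
  have "B \<subseteq> span (set ws)" using B(2) Bw(3) by simp
  then have fB: "finite B" using independent_span_bound[of "set ws" B] B(3) by simp
  obtain us' where us': "set us' = B - set us" "distinct us'"
    using finite_distinct_list[of "B - set us"] fB by blast
  have set: "set (us @ us') = B" using us' B(1) by auto
  have "span B \<subseteq> W" using span_minimal[OF B(2) sW] .
  then have "span B = W" using B(4) by blast
  moreover have "distinct (us @ us')" using us' Bu(1) by auto
  ultimately have "blist scale W (us @ us')" unfolding blist_def set using B(3) by simp
  then show ?thesis by (rule that)
qed

lemma funpow_in:
  assumes "n ` W \<subseteq> W" "x \<in> W" shows "(n ^^ j) x \<in> W"
  by (induction j) (use assms in auto)

lemma proj_funpow:
  assumes nW: "n ` W \<subseteq> W" and key: "\<And>x. x \<in> W \<Longrightarrow> p (n (p x)) = p (n x)" and x: "x \<in> W"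
  shows "((\<lambda>x. p (n x)) ^^ j) (p x) = p ((n ^^ j) x)"
proof (induction j)
  case 0 then show ?case by simp
next
  case (Suc j)
  have "((\<lambda>x. p (n x)) ^^ Suc j) (p x) = p (n (((\<lambda>x. p (n x)) ^^ j) (p x)))" by simp
  also have "\<dots> = p (n (p ((n ^^ j) x)))" using Suc by simp
  also have "\<dots> = p (n ((n ^^ j) x))" by (rule key[OF funpow_in[OF nW x]])
  also have "\<dots> = p ((n ^^ Suc j) x)" by simp
  finally show ?case .
qed

lemma kernel_vec:
  assumes nW: "n ` W \<subseteq> W" and "x \<in> W" "x \<noteq> 0" "(n ^^ N) x = 0"
  shows "\<exists>y\<in>W. y \<noteq> 0 \<and> n y = 0"
  using assms(2-4)
proof (induction N arbitrary: x)
  case 0 then show ?case by simp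
next
  case (Suc N)
  show ?case
  proof (cases "n x = 0")
    case True then show ?thesis using Suc.prems by blast
  next
    case False
    have "n x \<in> W" using nW Suc.prems(1) by blast
    moreover have "(n ^^ N) (n x) = 0" using Suc.prems(3) by (simp add: funpow_Suc_right del: funpow.simps)
    ultimately show ?thesis using Suc.IH False by blast
  qed
qed

lemma linear_plus_id:
  assumes "Vector_Spaces.linear scale scale n"
  shows "Vector_Spaces.linear scale scale (\<lambda>x. x + n x)"
proof -
  interpret vp: vector_space_pair scale scale by unfold_locales
  have lid: "Vector_Spaces.linear scale scale (\<lambda>x. x)" using linear_id unfolding id_def .
  show ?thesis by (rule vp.linear_compose_add[OF lid assms])
qed

lemma blist_line:
  assumes "y \<noteq> 0" shows "blist scale (span {y}) [y]"
  using assms by (simp add: blist_def)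

lemma lin_det_unipotent:
  assumes "blist scale W bs" "Vector_Spaces.linear scale scale n" "n ` W \<subseteq> W"
    "\<And>x. x \<in> W \<Longrightarrow> (n ^^ N) x = 0"
  shows "lin_det scale W (\<lambda>x. x + n x) = 1"
  using assms
proof (induction "length bs" arbitrary: bs W n rule: less_induct)
  case less
  note bs = less.prems(1) and ln = less.prems(2) and nW = less.prems(3) and nN = less.prems(4)
  note B = blistD[OF bs]
  have lf: "Vector_Spaces.linear scale scale (\<lambda>x. x + n x)" by (rule linear_plus_id[OF ln])
  interpret lni: Vector_Spaces.linear scale scale n by (rule ln)
  have fW: "(\<lambda>x. x + n x) ` W \<subseteq> W"
  proof
    fix z assume "z \<in> (\<lambda>x. x + n x) ` W"
    then obtain x where x: "x \<in> W" "z = x + n x" by blast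
    have "n x \<in> W" using x(1) nW by blast
    then show "z \<in> W" using x subspace_add[of W] subspace_span[of "set bs"] B(3) by simp
  qed
  show ?case
  proof (cases bs)
    case Nil
    have "lin_det scale W (\<lambda>x. x + n x) = det (rmat scale bs bs (\<lambda>x. x + n x))"
      by (rule lin_det_eq[OF bs lf fW])
    also have "\<dots> = 1" using Nil by (simp add: det_dim_zero[of _] rmat_def)
    finally show ?thesis .
  next
    case (Cons x0 xs)
    have x0W: "x0 \<in> W" using B(3) span_base[of x0 "set bs"] Cons by simp
    have x0nz: "x0 \<noteq> 0" using B(2) Cons dependent_zero[of "set bs"] by auto
    obtain y where y: "y \<in> W" "y \<noteq> 0" "n y = 0" using kernel_vec[OF nW x0W x0nz nN[OF x0W]] by blast
    have by1: "blist scale (span {y}) [y]" by (rule blist_line[OF y(2)])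
    have yW: "span {y} \<subseteq> W" using span_minimal[of "{y}" W] y(1) subspace_span[of "set bs"] B(3) by simp
    obtain us' where bs2: "blist scale W ([y] @ us')" using blist_extend[OF bs by1 yW] by blast
    have len: "length us' < length bs" using blist_len[OF bs bs2] by simp
    obtain p where lp: "Vector_Spaces.linear scale scale p" and p0: "\<And>x. x \<in> span (set [y]) \<Longrightarrow> p x = 0"
      and p1: "\<And>x. x \<in> span (set us') \<Longrightarrow> p x = x"
      and pW: "\<And>z. z \<in> W \<Longrightarrow> p z \<in> span (set us')" and pW': "\<And>z. z \<in> W \<Longrightarrow> z - p z \<in> span (set [y])"
      using proj_exists[OF bs2] by blast
    interpret lpi: Vector_Spaces.linear scale scale p by (rule lp)
    have ny: "n z = 0" if "z \<in> span {y}" for z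
    proof -
      from that obtain c where "z = c *s y" unfolding span_singleton by blast
      then show ?thesis by (simp add: lni.scale y(3))
    qed
    have fy: "(\<lambda>x. x + n x) ` span (set [y]) \<subseteq> span (set [y])" using ny by auto
    have split: "lin_det scale W (\<lambda>x. x + n x) =
        lin_det scale (span (set [y])) (\<lambda>x. x + n x) * lin_det scale (span (set us')) (\<lambda>x. p (x + n x))"
      by (rule lin_det_split[OF bs2 lf fW fy lp p0 p1])
    have d1: "lin_det scale (span (set [y])) (\<lambda>x. x + n x) = 1"
    proof -
      have "lin_det scale (span (set [y])) (\<lambda>x. x + n x) = lin_det scale (span (set [y])) (\<lambda>x. x)"
        by (rule lin_det_cong[OF blist_append(1)[OF bs2]]) (simp add: ny)
      also have "\<dots> = 1" by (rule lin_det_id[OF blist_append(1)[OF bs2]])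
      finally show ?thesis .
    qed
    let ?U' = "span (set us')"
    have U'W: "?U' \<subseteq> W" using B(3) blist_len span_mono[of "set us'" "set ([y] @ us')"] blistD(3)[OF bs2] by auto
    have lpn: "Vector_Spaces.linear scale scale (\<lambda>x. p (n x))"
      using Vector_Spaces.linear_compose[OF ln lp] unfolding o_def .
    have pnU': "(\<lambda>x. p (n x)) ` ?U' \<subseteq> ?U'"
    proof
      fix z assume "z \<in> (\<lambda>x. p (n x)) ` ?U'"
      then obtain x where x: "x \<in> ?U'" "z = p (n x)" by blast
      have "n x \<in> W" using x(1) U'W nW by blast
      then show "z \<in> ?U'" using pW x(2) by blast
    qed
    have key: "p (n (p x)) = p (n x)" if "x \<in> W" for x
    proof -
      have "n (x - p x) = 0" using ny pW'[OF that] by simp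
      then have "n x = n (p x)" by (simp add: lni.diff)
      then show ?thesis by simp
    qed
    have nil: "((\<lambda>x. p (n x)) ^^ N) x = 0" if "x \<in> ?U'" for x
    proof -
      have xW: "x \<in> W" using that U'W by blast
      have "((\<lambda>x. p (n x)) ^^ N) x = ((\<lambda>x. p (n x)) ^^ N) (p x)" using p1[OF that] by simp
      also have "\<dots> = p ((n ^^ N) x)" by (rule proj_funpow[where n=n and p=p and j=N, OF nW key xW])
      also have "\<dots> = 0" using nN[OF xW] by simp
      finally show ?thesis .
    qed
    have d2: "lin_det scale ?U' (\<lambda>x. p (x + n x)) = lin_det scale ?U' (\<lambda>x. x + p (n x))"
      by (rule lin_det_cong[OF blist_append(2)[OF bs2]]) (simp add: lpi.add p1)
    have d3: "lin_det scale ?U' (\<lambda>x. x + p (n x)) = 1"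
      by (rule less.hyps[OF len blist_append(2)[OF bs2] lpn pnU' nil])
    show ?thesis using split d1 d2 d3 by simp
  qed
qed

lemma lin_det_shrink:
  assumes ws: "blist scale W ws" and us: "blist scale U us" and UW: "U \<subseteq> W"
    and lphi: "Vector_Spaces.linear scale scale \<phi>" and phiW: "\<phi> ` W \<subseteq> W" and phiU: "\<phi> ` U \<subseteq> U"
    and N: "\<And>x. x \<in> W \<Longrightarrow> (\<phi> ^^ N) x \<in> U"
  shows "lin_det scale W (\<lambda>v. v + \<phi> v) = lin_det scale U (\<lambda>v. v + \<phi> v)"
proof -
  obtain us' where bs2: "blist scale W (us @ us')" using blist_extend[OF ws us UW] by blast
  have Ueq: "span (set us) = U" using blistD(3)[OF us] .
  obtain p where lp: "Vector_Spaces.linear scale scale p" and p0: "\<And>x. x \<in> span (set us) \<Longrightarrow> p x = 0"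
      and p1: "\<And>x. x \<in> span (set us') \<Longrightarrow> p x = x"
      and pW: "\<And>z. z \<in> W \<Longrightarrow> p z \<in> span (set us')" and pW': "\<And>z. z \<in> W \<Longrightarrow> z - p z \<in> span (set us)"
    using proj_exists[OF bs2] by blast
  interpret lpi: Vector_Spaces.linear scale scale p by (rule lp)
  interpret lphii: Vector_Spaces.linear scale scale \<phi> by (rule lphi)
  have lf: "Vector_Spaces.linear scale scale (\<lambda>x. x + \<phi> x)" by (rule linear_plus_id[OF lphi])
  have sW: "subspace W" using subspace_span[of "set ws"] blistD(3)[OF ws] by simp
  have sU: "subspace U" using subspace_span[of "set us"] Ueq by simp
  have fW: "(\<lambda>x. x + \<phi> x) ` W \<subseteq> W" using phiW subspace_add[OF sW] by auto
  have fU: "(\<lambda>x. x + \<phi> x) ` span (set us) \<subseteq> span (set us)" unfolding Ueq using phiU subspace_add[OF sU] by auto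
  have split: "lin_det scale W (\<lambda>x. x + \<phi> x) =
      lin_det scale (span (set us)) (\<lambda>x. x + \<phi> x) * lin_det scale (span (set us')) (\<lambda>x. p (x + \<phi> x))"
    by (rule lin_det_split[OF bs2 lf fW fU lp p0 p1])
  let ?U' = "span (set us')"
  have U'W: "?U' \<subseteq> W" using span_mono[of "set us'" "set (us @ us')"] blistD(3)[OF bs2] by auto
  have lpn: "Vector_Spaces.linear scale scale (\<lambda>x. p (\<phi> x))"
    using Vector_Spaces.linear_compose[OF lphi lp] unfolding o_def .
  have pnU': "(\<lambda>x. p (\<phi> x)) ` ?U' \<subseteq> ?U'"
  proof
    fix z assume "z \<in> (\<lambda>x. p (\<phi> x)) ` ?U'"
    then obtain x where x: "x \<in> ?U'" "z = p (\<phi> x)" by blast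
    have "\<phi> x \<in> W" using x(1) U'W phiW by blast
    then show "z \<in> ?U'" using pW x(2) by blast
  qed
  have key: "p (\<phi> (p x)) = p (\<phi> x)" if "x \<in> W" for x
  proof -
    have "\<phi> (x - p x) \<in> U" using pW'[OF that] phiU Ueq by blast
    then have "p (\<phi> (x - p x)) = 0" using p0 Ueq by blast
    then show ?thesis by (simp add: lphii.diff lpi.diff)
  qed
  have nil: "((\<lambda>x. p (\<phi> x)) ^^ N) x = 0" if "x \<in> ?U'" for x
  proof -
    have xW: "x \<in> W" using that U'W by blast
    have "((\<lambda>x. p (\<phi> x)) ^^ N) x = ((\<lambda>x. p (\<phi> x)) ^^ N) (p x)" using p1[OF that] by simp
    also have "\<dots> = p ((\<phi> ^^ N) x)" by (rule proj_funpow[where n=\<phi> and p=p and j=N, OF phiW key xW])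
    also have "\<dots> = 0" using N[OF xW] p0 Ueq by blast
    finally show ?thesis .
  qed
  have d2: "lin_det scale ?U' (\<lambda>x. p (x + \<phi> x)) = lin_det scale ?U' (\<lambda>x. x + p (\<phi> x))"
    by (rule lin_det_cong[OF blist_append(2)[OF bs2]]) (simp add: lpi.add p1)
  have d3: "lin_det scale ?U' (\<lambda>x. x + p (\<phi> x)) = 1"
    by (rule lin_det_unipotent[OF blist_append(2)[OF bs2] lpn pnU' nil])
  show ?thesis using split d2 d3 Ueq by simp
qed

end



locale rs =
  fixes \<iota> :: "'k::field \<Rightarrow> 'K::field" and sc :: "'K \<Rightarrow> 'v::ab_group_add \<Rightarrow> 'v"
  assumes hom_add: "\<And>a b. \<iota> (a + b) = \<iota> a + \<iota> b"
    and hom_mult: "\<And>a b. \<iota> (a * b) = \<iota> a * \<iota> b"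
    and hom_one: "\<iota> 1 = 1"
    and vs: "vector_space sc"
    and finK: "fin_dim_subspace (\<lambda>a y. \<iota> a * y) UNIV"
begin

sublocale K: vector_space sc by (rule vs)

lemma vsF: "vector_space (\<lambda>a y. \<iota> a * y)"
  by unfold_locales (auto simp: hom_add hom_mult hom_one algebra_simps)

lemma vsk: "vector_space (\<lambda>a v. sc (\<iota> a) v)"
  by unfold_locales (auto simp: hom_add hom_mult hom_one K.scale_right_distrib K.scale_left_distrib)

sublocale F: vector_space "\<lambda>a y. \<iota> a * y" by (rule vsF)
sublocale k: vector_space "\<lambda>a v. sc (\<iota> a) v" by (rule vsk)

definition bsK where "bsK = (SOME bs. blist (\<lambda>a y. \<iota> a * y) UNIV bs)"

lemma bsK: "blist (\<lambda>a y. \<iota> a * y) UNIV bsK"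
proof -
  obtain bs where "blist (\<lambda>a y. \<iota> a * y) UNIV bs" using F.fin_dim_blist[OF finK] by blast
  then show ?thesis unfolding bsK_def by (rule someI)
qed

lemma bsK_nz: "b \<in> set bsK \<Longrightarrow> b \<noteq> 0"
  using F.dependent_zero[of "set bsK"] F.blistD(2)[OF bsK] by auto

lemma linK_k: "Vector_Spaces.linear sc sc f \<Longrightarrow> Vector_Spaces.linear (\<lambda>a v. sc (\<iota> a) v) (\<lambda>a v. sc (\<iota> a) v) f"
  unfolding Vector_Spaces.linear_iff using vsk vs by auto

lemma subK_k: "K.subspace S \<Longrightarrow> k.subspace S"
  unfolding K.subspace_def k.subspace_def by auto

lemma kspan_sub: "k.span S \<subseteq> K.span S"
  by (rule k.span_minimal[OF K.span_superset subK_k[OF K.subspace_span]])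

definition Pl :: "'v list \<Rightarrow> 'v list" where
  "Pl es = concat (map (\<lambda>e. map (\<lambda>b. sc b e) bsK) es)"

lemma Pl_simps[simp]: "Pl [] = []" "Pl (e # es) = map (\<lambda>b. sc b e) bsK @ Pl es"
  "Pl (es @ es') = Pl es @ Pl es'"
  by (auto simp: Pl_def)

lemma set_Pl: "set (Pl es) = (\<lambda>(b, e). sc b e) ` (set bsK \<times> set es)"
  by (auto simp: Pl_def)

lemma length_Pl: "length (Pl es) = length bsK * length es"
  by (induction es) auto

lemma Pl_inj:
  assumes "K.independent (set es)"
  shows "inj_on (\<lambda>(b, e). sc b e) (set bsK \<times> set es)"
proof (rule inj_onI, clarify)
  fix b e b' e' assume b: "b \<in> set bsK" and e: "e \<in> set es" and b': "b' \<in> set bsK" and e': "e' \<in> set es"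
    and eq: "sc b e = sc b' e'"
  have ind: "K.independent (set es)" by fact
  have "K.representation (set es) (sc b e) e = b"
    using K.representation_scale[OF ind K.span_base[OF e], of b] K.representation_basis[OF ind e] by simp
  moreover have "K.representation (set es) (sc b' e') e = (if e = e' then b' else 0)"
    using K.representation_scale[OF ind K.span_base[OF e'], of b'] K.representation_basis[OF ind e'] by auto
  ultimately have "b = (if e = e' then b' else 0)" using eq by simp
  then show "b = b' \<and> e = e'" using bsK_nz[OF b] by (auto split: if_splits)
qed

lemma Pl_blist:
  assumes es: "blist sc W es"
  shows "blist (\<lambda>a v. sc (\<iota> a) v) W (Pl es)"
proof -
  note E = K.blistD[OF es] and BK = F.blistD[OF bsK]
  have inj: "inj_on (\<lambda>(b, e). sc b e) (set bsK \<times> set es)" by (rule Pl_inj[OF E(2)])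
  have card: "card (set (Pl es)) = length (Pl es)"
    unfolding set_Pl length_Pl card_image[OF inj] card_cartesian_product
    using distinct_card[OF BK(1)] distinct_card[OF E(1)] by simp
  have dist: "distinct (Pl es)" by (rule card_distinct[OF card])
  have sp1: "k.span (set (Pl es)) \<subseteq> W"
  proof -
    have "set (Pl es) \<subseteq> K.span (set es)"
      unfolding set_Pl by (auto intro!: K.span_scale[OF K.span_base])
    then have "K.span (set (Pl es)) \<subseteq> K.span (set es)"
      using K.span_minimal[OF _ K.subspace_span] by blast
    then show ?thesis using kspan_sub[of "set (Pl es)"] E(3) by blast
  qed
  have sp2: "W \<subseteq> k.span (set (Pl es))"
  proof
    fix x assume "x \<in> W"
    then have "x \<in> K.span (set es)" using E(3) by simp
    then obtain u where u: "x = (\<Sum>e\<in>set es. sc (u e) e)"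
      using K.span_finite[of "set es"] by auto
    have trm: "sc a e \<in> k.span (set (Pl es))" if e: "e \<in> set es" for a e
    proof -
      let ?r = "F.representation (set bsK) a"
      have "(\<Sum>b\<in>set bsK. \<iota> (?r b) * b) = a"
        using F.sum_representation_eq[OF BK(2), of a "set bsK"] BK(3) by simp
      then have "sc a e = sc (\<Sum>b\<in>set bsK. \<iota> (?r b) * b) e" by simp
      also have "\<dots> = (\<Sum>b\<in>set bsK. sc (\<iota> (?r b)) (sc b e))"
        by (simp add: K.scale_sum_left)
      also have "\<dots> \<in> k.span (set (Pl es))"
        by (rule k.span_sum, rule k.span_scale, rule k.span_base) (use e in \<open>auto simp: set_Pl\<close>)
      finally show ?thesis .
    qed
    show "x \<in> k.span (set (Pl es))" unfolding u by (rule k.span_sum) (rule trm)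
  qed
  have ind: "k.independent (set (Pl es))"
  proof (rule k.independent_if_scalars_zero)
    show "finite (set (Pl es))" by simp
    fix g x assume sum0: "(\<Sum>x\<in>set (Pl es). sc (\<iota> (g x)) x) = 0" and x: "x \<in> set (Pl es)"
    have "(\<Sum>x\<in>set (Pl es). sc (\<iota> (g x)) x) = (\<Sum>(b,e)\<in>set bsK \<times> set es. sc (\<iota> (g (sc b e))) (sc b e))"
      unfolding set_Pl by (subst sum.reindex[OF inj]) (simp add: case_prod_unfold)
    also have "\<dots> = (\<Sum>e\<in>set es. \<Sum>b\<in>set bsK. sc (\<iota> (g (sc b e))) (sc b e))"
      by (subst sum.cartesian_product[symmetric]) (rule sum.swap)
    also have "\<dots> = (\<Sum>e\<in>set es. sc (\<Sum>b\<in>set bsK. \<iota> (g (sc b e)) * b) e)"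
      by (simp add: K.scale_sum_left)
    finally have s: "(\<Sum>e\<in>set es. sc (\<Sum>b\<in>set bsK. \<iota> (g (sc b e)) * b) e) = 0" using sum0 by simp
    have c1: "(\<Sum>b\<in>set bsK. \<iota> (g (sc b e)) * b) = 0" if "e \<in> set es" for e
      using E(2) s that unfolding K.dependent_finite[OF finite_set] by auto
    have c2: "g (sc b e) = 0" if "e \<in> set es" "b \<in> set bsK" for b e
      using BK(2) c1[OF that(1)] that(2) unfolding F.dependent_finite[OF finite_set] by auto
    from x obtain b e where "b \<in> set bsK" "e \<in> set es" "x = sc b e" unfolding set_Pl by auto
    then show "g x = 0" using c2 by simp
  qed
  show ?thesis unfolding blist_def using dist ind sp1 sp2 by auto
qed

lemma kspan_Pl:
  assumes "blist sc W es" shows "k.span (set (Pl es)) = W"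
  using k.blistD(3)[OF Pl_blist[OF assms]] .

end



context rs begin

lemma linF_mult: "Vector_Spaces.linear (\<lambda>a y. \<iota> a * y) (\<lambda>a y. \<iota> a * y) (\<lambda>y. c * y)"
  unfolding Vector_Spaces.linear_iff by (intro conjI allI vsF) (simp_all add: distrib_left mult.left_commute)

lemma linK_scale: "Vector_Spaces.linear sc sc (\<lambda>x. sc c x)"
  using K.linear_scale_self .

lemma norm_eq: "field_norm \<iota> c = det (rmat (\<lambda>a y. \<iota> a * y) bsK bsK (\<lambda>y. c * y))"
  unfolding field_norm_def by (rule F.lin_det_eq[OF bsK linF_mult]) simp

lemma norm_mult: "field_norm \<iota> (c * d) = field_norm \<iota> c * field_norm \<iota> d"
proof -
  have ex: "(\<lambda>y. (c * d) * y) = (\<lambda>y. c * (d * y))" by (rule ext) (simp add: mult.assoc)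
  have "field_norm \<iota> (c * d) = lin_det (\<lambda>a y. \<iota> a * y) UNIV (\<lambda>y. c * (d * y))"
    unfolding field_norm_def ex ..
  also have "\<dots> = field_norm \<iota> c * field_norm \<iota> d"
    unfolding field_norm_def by (rule F.lin_det_mult[OF bsK linF_mult _ linF_mult]) simp_all
  finally show ?thesis .
qed

lemma norm_one: "field_norm \<iota> 1 = 1"
proof -
  have ex: "(\<lambda>y. 1 * y) = (\<lambda>y::'K. y)" by (rule ext) simp
  have "field_norm \<iota> 1 = lin_det (\<lambda>a y. \<iota> a * y) UNIV (\<lambda>y. y)"
    unfolding field_norm_def ex ..
  also have "\<dots> = 1" by (rule F.lin_det_id[OF bsK])
  finally show ?thesis .
qed

lemma rep_transfer:
  assumes e: "e \<noteq> 0" and i: "i < length bsK"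
  shows "k.representation (set (map (\<lambda>b. sc b e) bsK)) (sc x e) (sc (bsK!i) e) = F.representation (set bsK) x (bsK!i)"
proof -
  note BK = F.blistD[OF bsK]
  have kb: "blist (\<lambda>a v. sc (\<iota> a) v) (K.span {e}) (map (\<lambda>b. sc b e) bsK)"
    using Pl_blist[OF K.blist_line[OF e]] by simp
  note KB = k.blistD[OF kb]
  let ?M = "set (map (\<lambda>b. sc b e) bsK)"
  let ?r = "F.representation (set bsK) x"
  have "(\<Sum>b\<in>set bsK. \<iota> (?r b) * b) = x"
    using F.sum_representation_eq[OF BK(2), of x "set bsK"] BK(3) by simp
  then have Tx: "sc x e = (\<Sum>b\<in>set bsK. sc (\<iota> (?r b)) (sc b e))"
    by (metis (no_types, lifting) K.scale_scale K.scale_sum_left sum.cong)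
  have each: "sc b e \<in> k.span ?M" if "b \<in> set bsK" for b
    using that by (intro k.span_base) auto
  have "k.representation ?M (sc x e) = (\<lambda>v. \<Sum>b\<in>set bsK. k.representation ?M (sc (\<iota> (?r b)) (sc b e)) v)"
    unfolding Tx by (rule k.representation_sum[OF KB(2)]) (rule k.span_scale[OF each])
  also have "\<dots> = (\<lambda>v. \<Sum>b\<in>set bsK. ?r b * k.representation ?M (sc b e) v)"
    using k.representation_scale[OF KB(2) each] by simp
  also have "\<dots> = (\<lambda>v. \<Sum>b\<in>set bsK. ?r b * (if v = sc b e then 1 else 0))"
  proof (intro ext sum.cong refl)
    fix v b assume b: "b \<in> set bsK"
    have "sc b e \<in> ?M" using b by auto
    from k.representation_basis[OF KB(2) this]
    show "?r b * k.representation ?M (sc b e) v = ?r b * (if v = sc b e then 1 else 0)" by simp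
  qed
  finally have "k.representation ?M (sc x e) (sc (bsK!i) e) = (\<Sum>b\<in>set bsK. ?r b * (if sc (bsK!i) e = sc b e then 1 else 0))"
    by simp
  also have "\<dots> = (\<Sum>b\<in>set bsK. if b = bsK!i then ?r b else 0)"
    using e by (intro sum.cong) auto
  also have "\<dots> = ?r (bsK!i)" using i by simp
  finally show ?thesis .
qed

lemma line_det:
  assumes e: "e \<noteq> 0"
  shows "lin_det (\<lambda>a v. sc (\<iota> a) v) (K.span {e}) (\<lambda>x. sc c x) = field_norm \<iota> c"
proof -
  have kb: "blist (\<lambda>a v. sc (\<iota> a) v) (K.span {e}) (map (\<lambda>b. sc b e) bsK)"
    using Pl_blist[OF K.blist_line[OF e]] by simp
  have img: "(\<lambda>x. sc c x) ` K.span {e} \<subseteq> K.span {e}" by (auto intro: K.span_scale)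
  have "lin_det (\<lambda>a v. sc (\<iota> a) v) (K.span {e}) (\<lambda>x. sc c x) =
      det (rmat (\<lambda>a v. sc (\<iota> a) v) (map (\<lambda>b. sc b e) bsK) (map (\<lambda>b. sc b e) bsK) (\<lambda>x. sc c x))"
    by (rule k.lin_det_eq[OF kb linK_k[OF linK_scale] img])
  also have "rmat (\<lambda>a v. sc (\<iota> a) v) (map (\<lambda>b. sc b e) bsK) (map (\<lambda>b. sc b e) bsK) (\<lambda>x. sc c x)
      = rmat (\<lambda>a y. \<iota> a * y) bsK bsK (\<lambda>y. c * y)"
  proof (rule eq_matI)
    fix i j assume i: "i < dim_row (rmat (\<lambda>a y. \<iota> a * y) bsK bsK (\<lambda>y. c * y))"
      and j: "j < dim_col (rmat (\<lambda>a y. \<iota> a * y) bsK bsK (\<lambda>y. c * y))"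
    then have i: "i < length bsK" and j: "j < length bsK" by auto
    have "sc c (sc (bsK!j) e) = sc (c * bsK!j) e" by simp
    then show "rmat (\<lambda>a v. sc (\<iota> a) v) (map (\<lambda>b. sc b e) bsK) (map (\<lambda>b. sc b e) bsK) (\<lambda>x. sc c x) $$ (i, j) =
        rmat (\<lambda>a y. \<iota> a * y) bsK bsK (\<lambda>y. c * y) $$ (i, j)"
      using i j rep_transfer[OF e i, of "c * bsK!j"] by simp
  qed auto
  finally show ?thesis using norm_eq by simp
qed

end



context rs begin

lemma restrict_det:
  assumes "blist sc W es" "Vector_Spaces.linear sc sc f" "f ` W \<subseteq> W"
  shows "lin_det (\<lambda>a v. sc (\<iota> a) v) W f = field_norm \<iota> (lin_det sc W f)"
  using assms
proof (induction es arbitrary: W f)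
  case Nil
  have kb: "blist (\<lambda>a v. sc (\<iota> a) v) W []" using Pl_blist[OF Nil.prems(1)] by simp
  have "lin_det sc W f = 1"
    using K.lin_det_eq[OF Nil.prems] by (simp add: rmat_def)
  moreover have "lin_det (\<lambda>a v. sc (\<iota> a) v) W f = 1"
    using k.lin_det_eq[OF kb linK_k[OF Nil.prems(2)] Nil.prems(3)] by (simp add: rmat_def)
  ultimately show ?case by (simp add: norm_one)
next
  case (Cons e es')
  note bs = Cons.prems(1) and lf = Cons.prems(2) and fW = Cons.prems(3)
  have bsW: "blist sc W ([e] @ es')" using bs by simp
  note B = K.blistD[OF bs]
  have enz: "e \<noteq> 0" using B(2) K.dependent_zero[of "set (e # es')"] by auto
  have eW: "e \<in> W" using B(3) K.span_base[of e "set (e # es')"] by simp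
  have sW: "K.subspace W" using K.subspace_span[of "set (e # es')"] unfolding B(3) .
  let ?E = "K.span (set [e])" and ?U' = "K.span (set es')"
  have Eeq: "?E = K.span {e}" by simp
  obtain p where lp: "Vector_Spaces.linear sc sc p" and p0: "\<And>x. x \<in> ?E \<Longrightarrow> p x = 0"
      and p1: "\<And>x. x \<in> ?U' \<Longrightarrow> p x = x"
      and pW: "\<And>z. z \<in> W \<Longrightarrow> p z \<in> ?U'" and pW': "\<And>z. z \<in> W \<Longrightarrow> z - p z \<in> ?E"
    using K.proj_exists[OF bsW] by blast
  have kbs: "blist (\<lambda>a v. sc (\<iota> a) v) W (Pl [e] @ Pl es')"
    using Pl_blist[OF bsW] unfolding Pl_simps(3) .
  have kE: "k.span (set (Pl [e])) = ?E" by (rule kspan_Pl[OF K.blist_append(1)[OF bsW]])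
  have kU': "k.span (set (Pl es')) = ?U'" by (rule kspan_Pl[OF K.blist_append(2)[OF bsW]])
  have bE: "blist sc ?E [e]" by (rule K.blist_append(1)[OF bsW])
  have bU': "blist sc ?U' es'" by (rule K.blist_append(2)[OF bsW])
  have kbE: "blist (\<lambda>a v. sc (\<iota> a) v) ?E (Pl [e])" by (rule Pl_blist[OF bE])
  have U'W: "?U' \<subseteq> W" using K.span_mono[of "set es'" "set (e # es')"] B(3) by auto
  have claimA: "lin_det (\<lambda>a v. sc (\<iota> a) v) W g = field_norm \<iota> (lin_det sc W g)"
    if lg: "Vector_Spaces.linear sc sc g" and gW: "g ` W \<subseteq> W" and ge: "g e \<in> ?E" for g
  proof -
    interpret lgi: Vector_Spaces.linear sc sc g by (rule lg)
    from ge obtain c where c: "g e = sc c e" unfolding Eeq K.span_singleton by blast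
    have gE: "g z = sc c z" if "z \<in> ?E" for z
    proof -
      from that obtain a where "z = sc a e" unfolding Eeq K.span_singleton by blast
      then show ?thesis by (simp add: lgi.scale c mult.commute)
    qed
    have gEs: "g ` ?E \<subseteq> ?E" using gE K.span_scale by auto
    have lpg: "Vector_Spaces.linear sc sc (\<lambda>x. p (g x))"
      using Vector_Spaces.linear_compose[OF lg lp] unfolding o_def .
    have pgU': "(\<lambda>x. p (g x)) ` ?U' \<subseteq> ?U'"
    proof
      fix z assume "z \<in> (\<lambda>x. p (g x)) ` ?U'"
      then obtain x where x: "x \<in> ?U'" "z = p (g x)" by blast
      have "g x \<in> W" using x(1) U'W gW by blast
      then show "z \<in> ?U'" using pW x(2) by blast
    qed
    have Ks: "lin_det sc W g = lin_det sc ?E g * lin_det sc ?U' (\<lambda>x. p (g x))"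
      by (rule K.lin_det_split[OF bsW lg gW gEs lp p0 p1])
    have KE: "lin_det sc ?E g = c"
    proof -
      have "lin_det sc ?E g = lin_det sc ?E (\<lambda>x. sc c x)" by (rule K.lin_det_cong[OF bE gE])
      also have "\<dots> = det (rmat sc [e] [e] (\<lambda>x. sc c x))"
        by (rule K.lin_det_eq[OF bE linK_scale]) (auto intro: K.span_scale)
      also have "\<dots> = rmat sc [e] [e] (\<lambda>x. sc c x) $$ (0, 0)"
        by (rule det_single) (simp add: rmat_def)
      also have "\<dots> = K.representation {e} (sc c e) e" by simp
      also have "\<dots> = c"
        using K.representation_scale[OF K.blistD(2)[OF bE] K.span_base[of e "set [e]"], of c]
          K.representation_basis[OF K.blistD(2)[OF bE], of e] by simp
      finally show ?thesis .
    qed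
    have lgk: "Vector_Spaces.linear (\<lambda>a v. sc (\<iota> a) v) (\<lambda>a v. sc (\<iota> a) v) g" by (rule linK_k[OF lg])
    have lpk: "Vector_Spaces.linear (\<lambda>a v. sc (\<iota> a) v) (\<lambda>a v. sc (\<iota> a) v) p" by (rule linK_k[OF lp])
    have ks: "lin_det (\<lambda>a v. sc (\<iota> a) v) W g =
        lin_det (\<lambda>a v. sc (\<iota> a) v) (k.span (set (Pl [e]))) g * lin_det (\<lambda>a v. sc (\<iota> a) v) (k.span (set (Pl es'))) (\<lambda>x. p (g x))"
      by (rule k.lin_det_split[OF kbs lgk gW]) (use gEs p0 p1 kE kU' lpk in auto)
    have kEd: "lin_det (\<lambda>a v. sc (\<iota> a) v) ?E g = field_norm \<iota> c"
    proof -
      have "lin_det (\<lambda>a v. sc (\<iota> a) v) ?E g = lin_det (\<lambda>a v. sc (\<iota> a) v) ?E (\<lambda>x. sc c x)"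
        by (rule k.lin_det_cong[OF kbE gE])
      also have "\<dots> = field_norm \<iota> c" using line_det[OF enz, of c] by simp
      finally show ?thesis .
    qed
    have ih: "lin_det (\<lambda>a v. sc (\<iota> a) v) ?U' (\<lambda>x. p (g x)) = field_norm \<iota> (lin_det sc ?U' (\<lambda>x. p (g x)))"
      by (rule Cons.IH[OF bU' lpg pgU'])
    show ?thesis using ks Ks KE kEd ih kE kU' by (simp add: norm_mult)
  qed
  show ?case
  proof (cases "f e \<in> ?E")
    case True
    then show ?thesis by (rule claimA[OF lf fW])
  next
    case False
    define w where "w = f e"
    have wW: "w \<in> W" using fW eW w_def by blast
    have wE: "w \<notin> K.span {e}" using False w_def by simp
    have ind: "K.independent (insert w {e})"
      by (rule K.independent_insertI[OF wE]) (simp add: enz)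
    interpret vp: vector_space_pair sc sc by unfold_locales
    define n where "n = vp.construct (insert w {e}) (\<lambda>b. e - w)"
    have ln: "Vector_Spaces.linear sc sc n" unfolding n_def by (rule vp.linear_construct[OF ind])
    interpret lni: Vector_Spaces.linear sc sc n by (rule ln)
    have ne: "n e = e - w" unfolding n_def by (rule vp.construct_basis[OF ind]) simp
    have nw: "n w = e - w" unfolding n_def by (rule vp.construct_basis[OF ind]) simp
    have nrange: "n x \<in> K.span {e - w}" for x
      using vp.construct_in_span[OF ind, of "\<lambda>b. e - w" x] unfolding n_def by simp
    have ned: "n (e - w) = 0" by (simp add: lni.diff ne nw)
    have nn: "n (n x) = 0" for x
    proof -
      from nrange[of x] obtain a where "n x = sc a (e - w)" unfolding K.span_singleton by blast
      then show ?thesis by (simp add: lni.scale ned)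
    qed
    have nil: "(n ^^ 2) x = 0" for x by (simp add: numeral_2_eq_2 nn)
    have ewW: "e - w \<in> W" using K.subspace_diff[OF sW eW wW] .
    have nW: "n ` W \<subseteq> W"
    proof -
      have "K.span {e - w} \<subseteq> W" using K.span_minimal[of "{e - w}" W] ewW sW by simp
      then show ?thesis using nrange by blast
    qed
    have ltau: "Vector_Spaces.linear sc sc (\<lambda>x. x + n x)" by (rule K.linear_plus_id[OF ln])
    have tauW: "(\<lambda>x. x + n x) ` W \<subseteq> W" using nW K.subspace_add[OF sW] by auto
    define g where "g = (\<lambda>x. f x + n (f x))"
    have lg: "Vector_Spaces.linear sc sc g"
      using Vector_Spaces.linear_compose[OF lf ltau] unfolding g_def o_def .
    have gW: "g ` W \<subseteq> W" using fW tauW unfolding g_def by auto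
    have ge: "g e \<in> ?E" unfolding g_def w_def[symmetric] using nw K.span_base[of e "set [e]"] by simp
    have Kg: "lin_det sc W g = lin_det sc W (\<lambda>x. x + n x) * lin_det sc W f"
      unfolding g_def by (rule K.lin_det_mult[OF bs lf fW ltau tauW])
    have Kt: "lin_det sc W (\<lambda>x. x + n x) = 1"
      by (rule K.lin_det_unipotent[OF bs ln nW nil])
    have kbW: "blist (\<lambda>a v. sc (\<iota> a) v) W (Pl (e # es'))" by (rule Pl_blist[OF bs])
    have kg: "lin_det (\<lambda>a v. sc (\<iota> a) v) W g = lin_det (\<lambda>a v. sc (\<iota> a) v) W (\<lambda>x. x + n x) * lin_det (\<lambda>a v. sc (\<iota> a) v) W f"
      unfolding g_def by (rule k.lin_det_mult[OF kbW linK_k[OF lf] fW linK_k[OF ltau] tauW])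
    have kt: "lin_det (\<lambda>a v. sc (\<iota> a) v) W (\<lambda>x. x + n x) = 1"
      by (rule k.lin_det_unipotent[OF kbW linK_k[OF ln] nW nil])
    show ?thesis using claimA[OF lg gW ge] Kg Kt kg kt by simp
  qed
qed

end



lemma (in vector_space) linear_funpow:
  assumes "Vector_Spaces.linear scale scale f"
  shows "Vector_Spaces.linear scale scale (f ^^ n)"
proof (induction n)
  case 0 then show ?case using linear_id by (simp only: funpow.simps(1))
next
  case (Suc n)
  show ?case unfolding funpow.simps(2) by (rule Vector_Spaces.linear_compose[OF Suc assms])
qed

theorem proposition3p8:
  fixes \<iota> :: "'k::field \<Rightarrow> 'K::field"
    and sc :: "'K \<Rightarrow> 'v::ab_group_add \<Rightarrow> 'v"
    and \<phi> :: "'v \<Rightarrow> 'v"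
  assumes hom_add: "\<And>a b. \<iota> (a + b) = \<iota> a + \<iota> b"
    and hom_mult: "\<And>a b. \<iota> (a * b) = \<iota> a * \<iota> b"
    and hom_one: "\<iota> 1 = 1"
    and finite_ext: "fin_dim_subspace (\<lambda>a y. \<iota> a * y) UNIV"
    and vs: "vector_space sc"
    and lin: "Vector_Spaces.linear sc sc \<phi>"
    and fp: "finite_potent sc \<phi>"
    and inv: "bij (\<lambda>v. v + \<phi> v)"
  shows "Det_one_plus (\<lambda>a v. sc (\<iota> a) v) \<phi> = field_norm \<iota> (Det_one_plus sc \<phi>)"
proof -
  interpret R: rs \<iota> sc by (rule rs.intro[OF hom_add hom_mult hom_one vs finite_ext])
  interpret lphi: Vector_Spaces.linear sc sc \<phi> by (rule lin)
  have lin_k: "Vector_Spaces.linear (\<lambda>a v. sc (\<iota> a) v) (\<lambda>a v. sc (\<iota> a) v) \<phi>" by (rule R.linK_k[OF lin])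
  from fp obtain n0 where fd: "fin_dim_subspace sc (R.K.span (range (\<phi> ^^ n0)))"
    unfolding finite_potent_def by blast
  let ?Ws = "R.K.span (range (\<phi> ^^ n0))"
  have rng: "\<phi> ` range (\<phi> ^^ n0) \<subseteq> range (\<phi> ^^ n0)"
  proof
    fix y assume "y \<in> \<phi> ` range (\<phi> ^^ n0)"
    then obtain x where "y = \<phi> ((\<phi> ^^ n0) x)" by blast
    then have "y = (\<phi> ^^ n0) (\<phi> x)" by (simp add: funpow_swap1)
    then show "y \<in> range (\<phi> ^^ n0)" by blast
  qed
  have phiWs: "\<phi> ` ?Ws \<subseteq> ?Ws"
    unfolding lphi.span_image[symmetric] by (rule R.K.span_mono[OF rng])
  obtain ws where ws: "blist sc ?Ws ws" using R.K.fin_dim_blist[OF fd] by blast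
  have exK: "\<exists>W. fin_dim_subspace sc W \<and> \<phi> ` W \<subseteq> W \<and> (\<exists>n. range (\<phi> ^^ n) \<subseteq> W)"
    using fd phiWs R.K.span_superset by blast
  have exk: "\<exists>W. fin_dim_subspace (\<lambda>a v. sc (\<iota> a) v) W \<and> \<phi> ` W \<subseteq> W \<and> (\<exists>n. range (\<phi> ^^ n) \<subseteq> W)"
    using R.k.blist_fin_dim[OF R.Pl_blist[OF ws]] phiWs R.K.span_superset by blast
  define W1 where "W1 = (SOME W. fin_dim_subspace sc W \<and> \<phi> ` W \<subseteq> W \<and> (\<exists>n. range (\<phi> ^^ n) \<subseteq> W))"
  define W0 where "W0 = (SOME W. fin_dim_subspace (\<lambda>a v. sc (\<iota> a) v) W \<and> \<phi> ` W \<subseteq> W \<and> (\<exists>n. range (\<phi> ^^ n) \<subseteq> W))"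
  have W1: "fin_dim_subspace sc W1 \<and> \<phi> ` W1 \<subseteq> W1 \<and> (\<exists>n. range (\<phi> ^^ n) \<subseteq> W1)"
    unfolding W1_def by (rule someI_ex[OF exK])
  have W0: "fin_dim_subspace (\<lambda>a v. sc (\<iota> a) v) W0 \<and> \<phi> ` W0 \<subseteq> W0 \<and> (\<exists>n. range (\<phi> ^^ n) \<subseteq> W0)"
    unfolding W0_def by (rule someI_ex[OF exk])
  from W1 obtain n1 where fd1: "fin_dim_subspace sc W1" and phiW1: "\<phi> ` W1 \<subseteq> W1" and n1: "range (\<phi> ^^ n1) \<subseteq> W1"
    by blast
  from W0 obtain n2 where fd0: "fin_dim_subspace (\<lambda>a v. sc (\<iota> a) v) W0" and phiW0: "\<phi> ` W0 \<subseteq> W0"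
    and n2: "range (\<phi> ^^ n2) \<subseteq> W0" by blast
  obtain ws1 where ws1: "blist sc W1 ws1" using R.K.fin_dim_blist[OF fd1] by blast
  obtain ws0 where ws0: "blist (\<lambda>a v. sc (\<iota> a) v) W0 ws0" using R.k.fin_dim_blist[OF fd0] by blast
  define N where "N = n1 + n2"
  let ?U = "range (\<phi> ^^ N)"
  have lN: "Vector_Spaces.linear sc sc (\<phi> ^^ N)" by (rule R.K.linear_funpow[OF lin])
  interpret lNi: Vector_Spaces.linear sc sc "\<phi> ^^ N" by (rule lN)
  have sU: "R.K.subspace ?U" using lNi.subspace_image[OF R.K.subspace_UNIV] by simp
  have UW1: "?U \<subseteq> W1"
  proof
    fix y assume "y \<in> ?U"
    then obtain x where "y = (\<phi> ^^ N) x" by blast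
    then have "y = (\<phi> ^^ n1) ((\<phi> ^^ n2) x)" by (simp add: N_def funpow_add)
    then show "y \<in> W1" using n1 by blast
  qed
  have UW0: "?U \<subseteq> W0"
  proof
    fix y assume "y \<in> ?U"
    then obtain x where "y = (\<phi> ^^ N) x" by blast
    moreover have "(\<phi> ^^ N) x = (\<phi> ^^ n2) ((\<phi> ^^ n1) x)"
      unfolding N_def add.commute[of n1 n2] funpow_add by simp
    ultimately have "y = (\<phi> ^^ n2) ((\<phi> ^^ n1) x)" by simp
    then show "y \<in> W0" using n2 by blast
  qed
  have phiU: "\<phi> ` ?U \<subseteq> ?U"
  proof
    fix y assume "y \<in> \<phi> ` ?U"
    then obtain x where "y = \<phi> ((\<phi> ^^ N) x)" by blast
    then have "y = (\<phi> ^^ N) (\<phi> x)" by (simp add: funpow_swap1)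
    then show "y \<in> ?U" by blast
  qed
  obtain us where us: "blist sc ?U us" using R.K.sub_blist[OF ws1 sU UW1] by blast
  have inU: "\<And>x. (\<phi> ^^ N) x \<in> ?U" by blast
  have eK: "lin_det sc W1 (\<lambda>v. v + \<phi> v) = lin_det sc ?U (\<lambda>v. v + \<phi> v)"
    by (rule R.K.lin_det_shrink[OF ws1 us UW1 lin phiW1 phiU inU])
  have ek: "lin_det (\<lambda>a v. sc (\<iota> a) v) W0 (\<lambda>v. v + \<phi> v) = lin_det (\<lambda>a v. sc (\<iota> a) v) ?U (\<lambda>v. v + \<phi> v)"
    by (rule R.k.lin_det_shrink[OF ws0 R.Pl_blist[OF us] UW0 lin_k phiW0 phiU inU])
  have fU: "(\<lambda>v. v + \<phi> v) ` ?U \<subseteq> ?U"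
  proof
    fix y assume "y \<in> (\<lambda>v. v + \<phi> v) ` ?U"
    then obtain u where u: "u \<in> ?U" "y = u + \<phi> u" by blast
    have "\<phi> u \<in> ?U" using phiU u(1) by blast
    then show "y \<in> ?U" using R.K.subspace_add[OF sU u(1)] u(2) by simp
  qed
  have er: "lin_det (\<lambda>a v. sc (\<iota> a) v) ?U (\<lambda>v. v + \<phi> v) = field_norm \<iota> (lin_det sc ?U (\<lambda>v. v + \<phi> v))"
    by (rule R.restrict_det[OF us R.K.linear_plus_id[OF lin] fU])
  have "Det_one_plus (\<lambda>a v. sc (\<iota> a) v) \<phi> = lin_det (\<lambda>a v. sc (\<iota> a) v) W0 (\<lambda>v. v + \<phi> v)"
    unfolding Det_one_plus_def Let_def W0_def ..
  moreover have "Det_one_plus sc \<phi> = lin_det sc W1 (\<lambda>v. v + \<phi> v)"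
    unfolding Det_one_plus_def Let_def W1_def ..
  ultimately show ?thesis using eK ek er by simp
qed



end
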